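(* Let $\mathfrak v$ be an irreducible $C(m)$-module and $\mathfrak n=\mathfrak v\oplus\mathbb R^m$ the associated Lie algebra of Heisenberg type. Then every proper $C^+(m)$-submodule of $\mathfrak v$ (i.e. one that is non-zero and different from $\mathfrak v$) is a Lagrangian subspace of $\mathfrak v$.
   Context: $C(m)$ is the real Clifford algebra of $\mathbb R^m$ with relations $z^2=-\langle z,z\rangle1$ and $C^+(m)$ its even subalgebra, generated by products of two elements of $\mathbb R^m$. $\mathfrak v$ carries an inner product making each $J_z$ skew-symmetric, and $\mathfrak n=\mathfrak v\oplus\mathbb R^m$ has $\mathbb R^m$ central and bracket $\langle z,[u,v]\rangle=(J_zu,v)$. A Lagrangian subspace is a subspace $\mathcal L\subset\mathfrak v$ with $[\mathcal L,\mathcal L]=0$ and $\dim\mathcal L=\frac12\dim\mathfrak v$. *)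

theory Defs
  imports "HOL-Analysis.Analysis"
begin

text \<open>A Clifford module structure of C(m) on the real inner product space 'v, with
  R^m modelled by the Euclidean space 'z: a map J linear in z, with
  J_z^2 = -<z,z> id and each J_z skew-symmetric.\<close>
definition clifford_module :: "('z::euclidean_space \<Rightarrow> 'v::euclidean_space \<Rightarrow> 'v) \<Rightarrow> bool" where
  "clifford_module J \<longleftrightarrow>
     (\<forall>z. linear (J z)) \<and> (\<forall>u. linear (\<lambda>z. J z u)) \<and>
     (\<forall>z u. J z (J z u) = - (z \<bullet> z) *\<^sub>R u) \<and>
     (\<forall>z u w. J z u \<bullet> w = - (u \<bullet> J z w))"

text \<open>C(m)-submodule: subspace invariant under all J_z (which generate C(m)).\<close>
definition cliff_submodule :: "('z::euclidean_space \<Rightarrow> 'v::euclidean_space \<Rightarrow> 'v) \<Rightarrow> 'v set \<Rightarrow> bool" where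
  "cliff_submodule J W \<longleftrightarrow> subspace W \<and> (\<forall>z. \<forall>u\<in>W. J z u \<in> W)"

definition irreducible_cliff_module :: "('z::euclidean_space \<Rightarrow> 'v::euclidean_space \<Rightarrow> 'v) \<Rightarrow> bool" where
  "irreducible_cliff_module J \<longleftrightarrow> clifford_module J \<and> (UNIV::'v set) \<noteq> {0} \<and>
     (\<forall>W. cliff_submodule J W \<longrightarrow> W = {0} \<or> W = UNIV)"

text \<open>C^+(m)-submodule: subspace invariant under all products J_z J_w (which generate C^+(m)).\<close>
definition even_cliff_submodule :: "('z::euclidean_space \<Rightarrow> 'v::euclidean_space \<Rightarrow> 'v) \<Rightarrow> 'v set \<Rightarrow> bool" where
  "even_cliff_submodule J W \<longleftrightarrow> subspace W \<and> (\<forall>z w. \<forall>u\<in>W. J z (J w u) \<in> W)"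

text \<open>The Lie bracket of n = v + R^m restricted to v: the unique [u,v] in R^m with
  <z,[u,v]> = (J_z u, v) for all z.\<close>
definition heis_bracket :: "('z::euclidean_space \<Rightarrow> 'v::euclidean_space \<Rightarrow> 'v) \<Rightarrow> 'v \<Rightarrow> 'v \<Rightarrow> 'z" where
  "heis_bracket J u v = (\<Sum>b\<in>Basis. (J b u \<bullet> v) *\<^sub>R b)"

definition lagrangian :: "('z::euclidean_space \<Rightarrow> 'v::euclidean_space \<Rightarrow> 'v) \<Rightarrow> 'v set \<Rightarrow> bool" where
  "lagrangian J L \<longleftrightarrow> subspace L \<and> (\<forall>u\<in>L. \<forall>w\<in>L. heis_bracket J u w = 0) \<and>
     2 * dim L = DIM('v)"

end

theory Submission
  imports Defs
begin

lemma sym_eigen: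
  fixes f :: "'a::euclidean_space \<Rightarrow> 'a"
  assumes lf: "linear f" and sy: "\<And>x y. f x \<bullet> y = x \<bullet> f y"
  shows "\<exists>v c. v \<noteq> 0 \<and> f v = c *\<^sub>R v"
proof -
  have cont: "continuous_on (sphere 0 1) (\<lambda>x. f x \<bullet> x)"
    using lf by (intro continuous_intros) (simp add: linear_continuous_on linear_linear)
  have ne: "sphere (0::'a) 1 \<noteq> {}" by simp
  from continuous_attains_sup[OF compact_sphere ne cont]
  obtain v where v: "v \<in> sphere 0 1" and mx: "\<forall>y\<in>sphere 0 1. f y \<bullet> y \<le> f v \<bullet> v"
    by blast
  define c where "c = f v \<bullet> v"
  have nv: "norm v = 1" using v by simp
  have vv: "v \<bullet> v = 1" using nv by (simp add: norm_eq_1)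
  have q: "f x \<bullet> x \<le> c * (x \<bullet> x)" for x
  proof (cases "x = 0")
    case True then show ?thesis using lf by (simp add: linear_0)
  next
    case False
    define n where "n = norm x"
    have np: "n > 0" using False n_def by simp
    let ?y = "(1 / n) *\<^sub>R x"
    have "?y \<in> sphere 0 1" using False np n_def by simp
    then have le: "f ?y \<bullet> ?y \<le> c" using mx c_def by blast
    have "f ?y \<bullet> ?y = (1 / n) * ((1 / n) * (f x \<bullet> x))"
      by (simp only: linear_scale[OF lf] inner_scaleR_left inner_scaleR_right)
    also have "\<dots> = (f x \<bullet> x) / (n * n)" by simp
    finally have "(f x \<bullet> x) / (n * n) \<le> c" using le by simp
    then have "f x \<bullet> x \<le> c * (n * n)" using np by (simp add: pos_divide_le_eq)
    moreover have "x \<bullet> x = n * n" unfolding n_def by (simp add: power2_eq_square[symmetric] power2_norm_eq_inner)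
    ultimately show ?thesis by simp
  qed
  define w where "w = f v - c *\<^sub>R v"
  have vw: "v \<bullet> w = 0" unfolding w_def c_def using vv
    by (simp add: inner_diff_right inner_commute)
  have fvw: "f v \<bullet> w = w \<bullet> w"
  proof -
    have "f v = w + c *\<^sub>R v" by (simp add: w_def)
    then have "f v \<bullet> w = w \<bullet> w + c * (v \<bullet> w)" by (simp add: inner_add_left)
    then show ?thesis using vw by simp
  qed
  define D where "D = c * (w \<bullet> w) - f w \<bullet> w"
  have key: "2 * t * (w \<bullet> w) \<le> t^2 * D" for t
  proof -
    have q1: "f (v + t *\<^sub>R w) \<bullet> (v + t *\<^sub>R w) \<le> c * ((v + t *\<^sub>R w) \<bullet> (v + t *\<^sub>R w))" by (rule q)
    have e2: "f (v + t *\<^sub>R w) \<bullet> (v + t *\<^sub>R w) = c + 2 * t * (w \<bullet> w) + t^2 * (f w \<bullet> w)"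
    proof -
      have "f (v + t *\<^sub>R w) = f v + t *\<^sub>R f w" using lf by (simp add: linear_add linear_scale)
      moreover have "f w \<bullet> v = f v \<bullet> w" using sy[of w v] by (simp add: inner_commute)
      ultimately show ?thesis using fvw unfolding c_def
        by (simp add: inner_add_left inner_add_right power2_eq_square algebra_simps)
    qed
    have e3: "(v + t *\<^sub>R w) \<bullet> (v + t *\<^sub>R w) = 1 + t^2 * (w \<bullet> w)"
      using vv vw by (simp add: inner_add_left inner_add_right power2_eq_square inner_commute algebra_simps)
    have e4: "c * (1 + t^2 * (w \<bullet> w)) = c + c * (t^2 * (w \<bullet> w))" by (simp add: algebra_simps)
    have e5: "t^2 * D = c * (t^2 * (w \<bullet> w)) - t^2 * (f w \<bullet> w)" by (simp add: D_def algebra_simps)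
    have i1: "c + 2 * t * (w \<bullet> w) + t^2 * (f w \<bullet> w) \<le> c + c * (t^2 * (w \<bullet> w))"
      using q1 by (simp only: e2 e3 e4)
    show ?thesis unfolding e5 using i1 by linarith
  qed
  have "w = 0"
  proof (rule ccontr)
    assume "w \<noteq> 0"
    then have wp: "w \<bullet> w > 0" by simp
    define t where "t = (w \<bullet> w) / (\<bar>D\<bar> + 1)"
    have tp: "t > 0" using wp unfolding t_def by simp
    have "2 * t * (w \<bullet> w) \<le> t^2 * D" by (rule key)
    then have "2 * (w \<bullet> w) \<le> t * D" using tp by (simp add: power2_eq_square)
    moreover have "t * D \<le> t * \<bar>D\<bar>" using tp by (simp add: mult_left_mono)
    moreover have "t * \<bar>D\<bar> < w \<bullet> w" unfolding t_def using wp
      by (simp add: field_simps)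
    ultimately show False using wp by linarith
  qed
  then show ?thesis using nv unfolding w_def by (intro exI[of _ v] exI[of _ c]) auto
qed

theorem theorem4p7:
  fixes J :: "'z::euclidean_space \<Rightarrow> 'v::euclidean_space \<Rightarrow> 'v"
    and W :: "'v set"
  assumes "irreducible_cliff_module J"
    and "even_cliff_submodule J W"
    and "W \<noteq> {0}"
    and "W \<noteq> UNIV"
  shows "lagrangian J W"
proof -
  have cm: "clifford_module J" and irr: "\<And>S. cliff_submodule J S \<Longrightarrow> S = {0} \<or> S = UNIV"
    using assms(1) unfolding irreducible_cliff_module_def by auto
  have lin: "\<And>z. linear (J z)" and sq: "\<And>z u. J z (J z u) = - (z \<bullet> z) *\<^sub>R u"
    and sk: "\<And>z u w. J z u \<bullet> w = - (u \<bullet> J z w)"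
    using cm unfolding clifford_module_def by auto
  have subW: "subspace W" and evW: "\<And>z w u. u \<in> W \<Longrightarrow> J z (J w u) \<in> W"
    using assms(2) unfolding even_cliff_submodule_def by auto
  define Wp where "Wp = orthogonal_comp W"
  have subWp: "subspace Wp" unfolding Wp_def by (rule subspace_orthogonal_comp)
  have Wp_iff: "\<And>x. x \<in> Wp \<longleftrightarrow> (\<forall>y\<in>W. y \<bullet> x = 0)"
    unfolding Wp_def orthogonal_comp_def orthogonal_def by simp
  have evWp: "J z (J w u) \<in> Wp" if u: "u \<in> Wp" for z w u
    unfolding Wp_iff
  proof
    fix y assume y: "y \<in> W"
    have "y \<bullet> J z (J w u) = J w (J z y) \<bullet> u"
      using sk[of z y "J w u"] sk[of w "J z y" u] by simp
    also have "\<dots> = 0" using u y evW Wp_iff by auto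
    finally show "y \<bullet> J z (J w u) = 0" .
  qed
  have dec: "\<exists>y\<in>W. v - y \<in> Wp" for v
  proof -
    have "v \<in> W + Wp" using subspace_sum_orthogonal_comp[OF subW] unfolding Wp_def by simp
    then obtain a b where "a \<in> W" "b \<in> Wp" "v = a + b" by (meson set_plus_elim)
    then show ?thesis by (intro bexI[of _ a]) auto
  qed
  have int0: "W \<inter> Wp = {0}" using orthogonal_Int_0[OF subW] unfolding Wp_def .
  have uniq: "y = y'" if "y \<in> W" "v - y \<in> Wp" "y' \<in> W" "v - y' \<in> Wp" for v y y'
  proof -
    have "(v - y') - (v - y) \<in> Wp" using that subspace_diff[OF subWp] by blast
    moreover have "y - y' \<in> W" using that subW by (simp add: subspace_diff)
    ultimately have "y - y' \<in> W \<inter> Wp" by (simp add: algebra_simps)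
    then show ?thesis using int0 by auto
  qed
  define p where "p v = (THE y. y \<in> W \<and> v - y \<in> Wp)" for v
  have p_char: "p v = y" if "y \<in> W" "v - y \<in> Wp" for v y
    unfolding p_def by (rule the_equality) (use that uniq in blast)+
  have pW: "p v \<in> W" and pWp: "v - p v \<in> Wp" for v
    using dec[of v] p_char by auto
  have lp: "linear p"
  proof (rule linearI)
    fix x y
    show "p (x + y) = p x + p y"
    proof (rule p_char)
      show "p x + p y \<in> W" using pW subW by (simp add: subspace_add)
      have "(x - p x) + (y - p y) \<in> Wp" using pWp subWp by (simp add: subspace_add)
      then show "x + y - (p x + p y) \<in> Wp" by (simp add: algebra_simps)
    qed
  next
    fix c :: real and x
    show "p (c *\<^sub>R x) = c *\<^sub>R p x"
    proof (rule p_char)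
      show "c *\<^sub>R p x \<in> W" using pW subW by (simp add: subspace_scale)
      have "c *\<^sub>R (x - p x) \<in> Wp" using pWp subWp by (simp add: subspace_scale)
      then show "c *\<^sub>R x - c *\<^sub>R p x \<in> Wp" by (simp add: algebra_simps)
    qed
  qed
  have p_sym: "p u \<bullet> v = u \<bullet> p v" for u v
  proof -
    have "p u \<bullet> (v - p v) = 0" using pW pWp Wp_iff by blast
    moreover have "p v \<bullet> (u - p u) = 0" using pW pWp Wp_iff by blast
    ultimately show ?thesis by (simp add: inner_diff_right inner_commute)
  qed
  have p_onW: "p v = v" if "v \<in> W" for v using p_char[of v v] that subWp by (simp add: subspace_0)
  have p_onWp: "p v = 0" if "v \<in> Wp" for v using p_char[of 0 v] that subW by (simp add: subspace_0)
  have p_even: "p (J z (J w v)) = J z (J w (p v))" for z w v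
  proof (rule p_char)
    show "J z (J w (p v)) \<in> W" using pW evW by blast
    have "J z (J w (v - p v)) \<in> Wp" using pWp evWp by blast
    then show "J z (J w v) - J z (J w (p v)) \<in> Wp" using lin by (simp add: linear_diff)
  qed
  define Q where "Q v = 2 *\<^sub>R p v - v" for v
  have lQ: "linear Q" unfolding Q_def by (rule linearI) (simp_all add: linear_add[OF lp] linear_scale[OF lp] algebra_simps)
  have QQ: "Q (Q v) = v" for v
  proof -
    have "p (Q v) = p v"
    proof (rule p_char)
      show "p v \<in> W" by (rule pW)
      have "- (v - p v) \<in> Wp" using subspace_neg[OF subWp pWp[of v]] .
      then show "Q v - p v \<in> Wp" unfolding Q_def by (simp add: algebra_simps scaleR_2)
    qed
    then show ?thesis unfolding Q_def by simp
  qed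
  have Q_sym: "Q u \<bullet> v = u \<bullet> Q v" for u v
    unfolding Q_def using p_sym[of u v] by (simp add: inner_diff_left inner_diff_right inner_commute)
  have Q_even: "Q (J z (J w v)) = J z (J w (Q v))" for z w v
    unfolding Q_def using p_even lin by (simp add: linear_diff linear_scale)
  have Q_W: "Q v = v" if "v \<in> W" for v unfolding Q_def using p_onW[OF that] by (simp add: scaleR_2)
  have Q_Wp: "Q v = - v" if "v \<in> Wp" for v unfolding Q_def using p_onWp[OF that] by simp
  have Q_negW: "v \<in> Wp" if "Q v = - v" for v
  proof -
    have "p v = 0" using that unfolding Q_def by (simp add: diff_eq_eq)
    then show ?thesis using pWp[of v] by simp
  qed
  have Q_posW: "v \<in> W" if "Q v = v" for v
  proof -
    have "p v = v" using that unfolding Q_def by (simp add: diff_eq_eq scaleR_2[symmetric])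
    then show ?thesis using pW[of v] by simp
  qed
  obtain w0 where w0: "w0 \<in> W" "w0 \<noteq> 0" using assms(3) subW subspace_0 by blast
  have "Wp \<noteq> {0}"
  proof
    assume "Wp = {0}"
    then have "W = UNIV" using orthogonal_comp_self[OF subW] unfolding Wp_def by simp
    then show False using assms(4) by simp
  qed
  then obtain w1 where w1: "w1 \<in> Wp" "w1 \<noteq> 0" using subWp subspace_0 by blast
  have main: "(\<forall>u\<in>W. J b u \<in> Wp) \<and> (\<forall>u\<in>Wp. J b u \<in> W)" if b: "b \<in> Basis" for b
  proof -
    have JJ: "J b (J b u) = - u" for u using sq[of b u] b by simp
    define A where "A v = Q v - J b (Q (J b v))" for v
    have lA: "linear A" unfolding A_def
      by (rule linearI) (simp_all add: linear_add[OF lQ] linear_add[OF lin] linear_scale[OF lQ] linear_scale[OF lin] algebra_simps)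
    have A_sym: "A u \<bullet> v = u \<bullet> A v" for u v
    proof -
      have "J b (Q (J b u)) \<bullet> v = u \<bullet> J b (Q (J b v))"
        using sk[of b "Q (J b u)" v] sk[of b u "Q (J b v)"] Q_sym[of "J b u" "J b v"] by simp
      then show ?thesis unfolding A_def using Q_sym[of u v] by (simp add: inner_diff_left inner_diff_right)
    qed
    have A_comm: "A (J y v) = J y (A v)" for y v
    proof -
      have e1: "J b (Q (J b (J y v))) = - J y (Q v)"
      proof -
        have "J b (Q (J b (J y v))) = J b (J b (J y (Q v)))" using Q_even by simp
        then show ?thesis using JJ by simp
      qed
      have e2: "J y (J b (Q (J b v))) = - Q (J y v)"
      proof -
        have "J y (J b (Q (J b v))) = Q (J y (J b (J b v)))" using Q_even by simp
        also have "\<dots> = Q (J y (- v))" using JJ by simp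
        finally show ?thesis using lin lQ by (simp add: linear_neg)
      qed
      show ?thesis unfolding A_def using e1 e2 lin by (simp add: linear_diff)
    qed
    obtain v c where v: "v \<noteq> 0" "A v = c *\<^sub>R v" using sym_eigen[OF lA A_sym] by blast
    let ?S = "{x. A x = c *\<^sub>R x}"
    have "cliff_submodule J ?S" unfolding cliff_submodule_def
    proof
      show "subspace ?S" unfolding subspace_def using lA by (auto simp: linear_0 linear_add linear_scale algebra_simps)
      show "\<forall>z. \<forall>u\<in>?S. J z u \<in> ?S" using A_comm lin by (simp add: linear_scale)
    qed
    then have "?S = UNIV" using irr v by blast
    then have Ac: "A x = c *\<^sub>R x" for x by blast
    have c0: "c = 0"
    proof (rule ccontr)
      assume cne: "c \<noteq> 0"
      have id2: "(2 * c) *\<^sub>R Q x = (c * c) *\<^sub>R x" for x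
      proof -
        define x' where "x' = J b (Q (J b x))"
        have x'e: "x' = Q x - c *\<^sub>R x" using Ac[of x] unfolding A_def x'_def by (simp add: algebra_simps)
        have "J b (Q (J b x')) = x" unfolding x'_def using JJ QQ lQ lin by (simp add: linear_neg)
        moreover have "J b (Q (J b x')) = Q x' - c *\<^sub>R x'" using Ac[of x'] unfolding A_def by (simp add: algebra_simps)
        ultimately have "x = Q x' - c *\<^sub>R x'" by simp
        also have "\<dots> = x - (2 * c) *\<^sub>R Q x + (c * c) *\<^sub>R x"
        proof -
          have two: "(c * 2) *\<^sub>R y = c *\<^sub>R y + c *\<^sub>R y" for y :: 'v
            by (metis mult_2_right scaleR_add_left)
          show ?thesis unfolding x'e using QQ lQ two by (simp add: linear_diff linear_scale algebra_simps)
        qed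
        finally show ?thesis by (simp add: algebra_simps)
      qed
      have "(2 * c) *\<^sub>R w0 = (c * c) *\<^sub>R w0" using id2[of w0] Q_W[OF w0(1)] by simp
      then have "2 * c = c * c" using w0(2) by (simp add: scaleR_cancel_right)
      moreover have "(2 * c) *\<^sub>R (- w1) = (c * c) *\<^sub>R w1" using id2[of w1] Q_Wp[OF w1(1)] by simp
      then have "- ((2 * c) *\<^sub>R w1) = (c * c) *\<^sub>R w1" by simp
      then have "(c * c) *\<^sub>R w1 + (2 * c) *\<^sub>R w1 = 0" by (metis add.left_inverse)
      then have "(c * c + 2 * c) *\<^sub>R w1 = 0" by (simp only: scaleR_add_left)
      then have "c * c + 2 * c = 0" using w1(2) by simp
      ultimately show False using cne by simp
    qed
    have key: "J b (Q (J b x)) = Q x" for x using Ac[of x] c0 unfolding A_def by simp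
    have QJ: "Q (J b u) = - J b (Q u)" for u
    proof -
      have "Q (J b u) = J b (Q (J b (J b u)))" using key[of "J b u"] by simp
      also have "\<dots> = - J b (Q u)" using JJ lQ lin by (simp add: linear_neg)
      finally show ?thesis .
    qed
    show ?thesis
    proof (intro conjI ballI)
      fix u assume "u \<in> W"
      then have "Q (J b u) = - J b u" using QJ[of u] Q_W by simp
      then show "J b u \<in> Wp" by (rule Q_negW)
    next
      fix u assume "u \<in> Wp"
      then have "Q (J b u) = J b u" using QJ[of u] Q_Wp lin by (simp add: linear_neg)
      then show "J b u \<in> W" by (rule Q_posW)
    qed
  qed
  show ?thesis unfolding lagrangian_def
  proof (intro conjI ballI)
    show "subspace W" by (rule subW)
  next
    fix u w assume u: "u \<in> W" and w: "w \<in> W"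
    have "J b u \<bullet> w = 0" if b: "b \<in> Basis" for b
    proof -
      have "J b u \<in> Wp" using main[OF b] u by blast
      then have "w \<bullet> J b u = 0" using Wp_iff w by blast
      then show ?thesis by (simp add: inner_commute)
    qed
    then show "heis_bracket J u w = 0" unfolding heis_bracket_def by simp
  next
    obtain b :: 'z where b: "b \<in> Basis" using nonempty_Basis by blast
    have injJ: "inj_on (J b) S" for S
    proof (rule inj_on_inverseI[of _ "\<lambda>x. - J b x"])
      fix x show "- J b (J b x) = x" using sq[of b x] b by simp
    qed
    have d1: "dim W \<le> dim Wp"
    proof -
      have "dim (J b ` W) = dim W" using dim_image_eq[OF lin injJ] .
      moreover have "J b ` W \<subseteq> Wp" using main[OF b] by auto
      ultimately show ?thesis using dim_subset by metis
    qed
    have d2: "dim Wp \<le> dim W"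
    proof -
      have "dim (J b ` Wp) = dim Wp" using dim_image_eq[OF lin injJ] .
      moreover have "J b ` Wp \<subseteq> W" using main[OF b] by auto
      ultimately show ?thesis using dim_subset by metis
    qed
    have "dim (W \<union> Wp) = dim W + dim Wp"
      by (rule dim_orthogonal_sum) (use Wp_iff in blast)
    moreover have "span (W \<union> Wp) = UNIV"
    proof -
      have "v \<in> span (W \<union> Wp)" for v
      proof -
        obtain y where "y \<in> W" "v - y \<in> Wp" using dec by blast
        then have "y + (v - y) \<in> span (W \<union> Wp)" by (intro span_add span_base) auto
        then show ?thesis by simp
      qed
      then show ?thesis by auto
    qed
    then have "dim (W \<union> Wp) = DIM('v)" by (metis dim_span dim_UNIV)
    ultimately show "2 * dim W = DIM('v)" using d1 d2 by simp
  qed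
qed

end
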